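(* Let $\mathcal A$ be a toric arrangement in $T$, $X=X_\Delta$ a good toric variety for $\mathcal A$, $B=H^*(X,\mathbb Z)$, and $G\in\mathcal L'$. Let $I\subseteq B$ be the kernel of the restriction map $H^*(X,\mathbb Z)\to H^*(G,\mathbb Z)$. Let $P_G(t)\in B[t]$ be a good lifting of the Chern polynomial of the normal bundle $N_GX$. Then the ideal $(tI,\,P_G(-t))\subseteq B[t]$ does not depend on the choice of the good lifting $P_G(t)$.
   Context: $T$ is a complex algebraic torus with character lattice $X^*(T)$; a layer is $\mathcal K_{\Gamma,\phi}=\{t\in T: x_\chi(t)=\phi(\chi)\ \forall\chi\in\Gamma\}$ with $\Gamma$ a split direct summand of $X^*(T)$ and $\phi:\Gamma\to\mathbb C^*$ a homomorphism; a toric arrangement $\mathcal A$ is a finite set of layers. A good toric variety for $\mathcal A$ is a smooth projective toric variety $X_\Delta$ such that for each layer which is a connected component of an intersection of layers of $\mathcal A$, the lattice $\Gamma$ has an integral basis $\chi_1,\dots,\chi_s$ which, for every cone of $\Delta$ with ray generators $r_1,\dots,r_h$ and after changing signs of some $\chi_i$, has all pairings $\langle\chi_i,r_j\rangle\ge0$ or all $\le0$. $\mathcal L'$ is the set of connected components of intersections of closures in $X$ of layers of $\mathcal A$. For $G\in\mathcal L'$ of codimension $d$, a polynomial $P_G(t)\in B[t]$ is a good lifting of the Chern polynomial of $N_GX$ if (1) $P_G(0)$ is the cohomology class dual to the homology class of $G$, and (2) its image in $H^*(G,\mathbb Z)[t]$ under restriction of coefficients is $t^d+c_1(N_GX)t^{d-1}+\dots+c_d(N_GX)$.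 *)

theory Defs
  imports "HOL-Computational_Algebra.Polynomial"
begin

definition is_ideal :: "'a::comm_ring_1 set \<Rightarrow> bool" where
  "is_ideal J \<longleftrightarrow> 0 \<in> J \<and> (\<forall>x\<in>J. \<forall>y\<in>J. x + y \<in> J) \<and> (\<forall>r. \<forall>x\<in>J. r * x \<in> J)"

definition ideal_gen :: "'a::comm_ring_1 set \<Rightarrow> 'a set" where
  "ideal_gen S = \<Inter>{J. is_ideal J \<and> S \<subseteq> J}"

definition is_ring_hom :: "('a::comm_ring_1 \<Rightarrow> 'b::comm_ring_1) \<Rightarrow> bool" where
  "is_ring_hom f \<longleftrightarrow> f 1 = 1 \<and> (\<forall>x y. f (x + y) = f x + f y) \<and> (\<forall>x y. f (x * y) = f x * f y)"

definition chern_poly :: "nat \<Rightarrow> (nat \<Rightarrow> 'a::comm_ring_1) \<Rightarrow> 'a poly" where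
  "chern_poly d c = monom 1 d + (\<Sum>i\<in>{1..d}. monom (c i) (d - i))"

text \<open>Good lifting: P(0) is the class dual to G, and restricting coefficients gives the Chern polynomial.\<close>

definition good_lifting ::
  "('b::comm_ring_1 \<Rightarrow> 'h::comm_ring_1) \<Rightarrow> 'b \<Rightarrow> nat \<Rightarrow> (nat \<Rightarrow> 'h) \<Rightarrow> 'b poly \<Rightarrow> bool" where
  "good_lifting res clG d c P \<longleftrightarrow> poly P 0 = clG \<and> map_poly res P = chern_poly d c"

definition tI_P_ideal :: "('b::comm_ring_1 \<Rightarrow> 'h::comm_ring_1) \<Rightarrow> 'b poly \<Rightarrow> 'b poly set" where
  "tI_P_ideal res P = ideal_gen ({[:0, b:] | b. res b = 0} \<union> {pcompose P [:0, -1:]})"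

end

theory Submission
  imports Defs
begin

lemma ideal_gen_ideal: "is_ideal (ideal_gen S)"
  unfolding is_ideal_def ideal_gen_def by auto

lemma ideal_gen_sup: "S \<subseteq> ideal_gen S"
  unfolding ideal_gen_def by auto

lemma ideal_gen_least: "is_ideal J \<Longrightarrow> S \<subseteq> J \<Longrightarrow> ideal_gen S \<subseteq> J"
  unfolding ideal_gen_def by auto

lemma hom_0: "is_ring_hom res \<Longrightarrow> res 0 = 0"
proof -
  assume "is_ring_hom res"
  hence "res (0 + 0) = res 0 + res 0" unfolding is_ring_hom_def by blast
  thus "res 0 = 0" by simp
qed

lemma hom_neg: "is_ring_hom res \<Longrightarrow> res (- x) = - res x"
proof -
  assume h: "is_ring_hom res"
  hence "res (x + - x) = res x + res (- x)" unfolding is_ring_hom_def by blast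
  hence "res x + res (- x) = 0" using hom_0[OF h] by simp
  thus ?thesis by (simp add: eq_neg_iff_add_eq_0 add.commute)
qed

lemma hom_diff: "is_ring_hom res \<Longrightarrow> res (x - y) = res x - res y"
proof -
  assume h: "is_ring_hom res"
  have "res (x + - y) = res x + res (- y)" using h unfolding is_ring_hom_def by blast
  thus ?thesis using hom_neg[OF h] by simp
qed

lemma pcomp_K:
  assumes h: "is_ring_hom res"
  shows "(\<forall>i. res (coeff p i) = 0) \<Longrightarrow> (\<forall>i. res (coeff (pcompose p [:0, -1:]) i) = 0)"
proof (induction p)
  case 0
  then show ?case using hom_0[OF h] by simp
next
  case (pCons a p)
  have ha: "res a = 0" using pCons.prems by (metis coeff_pCons_0)
  have hp: "\<forall>i. res (coeff p i) = 0" using pCons.prems by (metis coeff_pCons_Suc)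
  have IH: "\<forall>i. res (coeff (pcompose p [:0, -1:]) i) = 0" using pCons.IH hp by blast
  show ?case
  proof
    fix i
    show "res (coeff (pcompose (pCons a p) [:0, - 1:]) i) = 0"
      using ha IH hom_neg[OF h] hom_0[OF h]
      by (cases i) (auto simp: pcompose_pCons coeff_pCons)
  qed
qed

lemma shift_in:
  assumes J: "is_ideal J" and gen: "\<And>b. res b = 0 \<Longrightarrow> [:0, b:] \<in> J"
  shows "(\<forall>i. res (coeff q i) = 0) \<Longrightarrow> pCons 0 q \<in> J"
proof (induction q)
  case 0
  then show ?case using J unfolding is_ideal_def by simp
next
  case (pCons a q)
  have ha: "res a = 0" using pCons.prems by (metis coeff_pCons_0)
  have hq: "\<forall>i. res (coeff q i) = 0" using pCons.prems by (metis coeff_pCons_Suc)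
  have e: "pCons 0 (pCons a q) = [:0, a:] + [:0, 1:] * pCons 0 q"
    by (simp add: poly_eq_iff coeff_pCons split: nat.split)
  have "[:0,a:] \<in> J" using gen ha by auto
  moreover have "[:0, 1:] * pCons 0 q \<in> J" using pCons.IH hq J unfolding is_ideal_def by blast
  ultimately show ?case using J e unfolding is_ideal_def by metis
qed

lemma incl:
  assumes h: "is_ring_hom res"
    and gP: "good_lifting res clG d c P"
    and gQ: "good_lifting res clG d c Q"
  shows "tI_P_ideal res P \<subseteq> tI_P_ideal res Q"
proof -
  let ?J = "tI_P_ideal res Q"
  have J: "is_ideal ?J" unfolding tI_P_ideal_def by (rule ideal_gen_ideal)
  have gen: "[:0, b:] \<in> ?J" if "res b = 0" for b
  proof -
    have "[:0, b:] \<in> {[:0, b:] | b. res b = 0} \<union> {pcompose Q [:0, -1:]}" using that by blast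
    thus ?thesis unfolding tI_P_ideal_def by (rule subsetD[OF ideal_gen_sup])
  qed
  have qJ: "pcompose Q [:0, -1:] \<in> ?J"
  proof -
    have "pcompose Q [:0, -1:] \<in> {[:0, b:] | b. res b = 0} \<union> {pcompose Q [:0, -1:]}" by blast
    thus ?thesis unfolding tI_P_ideal_def by (rule subsetD[OF ideal_gen_sup])
  qed
  let ?D = "pcompose (P - Q) [:0, -1:]"
  have mp1: "map_poly res P = chern_poly d c" using gP unfolding good_lifting_def by (rule conjunct2)
  have mp2: "map_poly res Q = chern_poly d c" using gQ unfolding good_lifting_def by (rule conjunct2)
  have mp: "map_poly res P = map_poly res Q" using mp1 mp2 by (rule trans[OF _ sym])
  have cK: "\<forall>i. res (coeff (P - Q) i) = 0"
  proof
    fix i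
    have "coeff (map_poly res P) i = coeff (map_poly res Q) i" using mp by simp
    hence "res (coeff P i) = res (coeff Q i)" by (simp only: coeff_map_poly[of res, OF hom_0[OF h]])
    thus "res (coeff (P - Q) i) = 0" using hom_diff[OF h] by simp
  qed
  have DK: "\<forall>i. res (coeff ?D i) = 0" using pcomp_K[OF h] cK by blast
  have D0: "coeff ?D 0 = 0"
  proof -
    have "coeff ?D 0 = poly ?D 0" by (rule poly_0_coeff_0[symmetric])
    also have "\<dots> = poly P 0 - poly Q 0" by (simp only: poly_pcompose) simp
    also have "\<dots> = 0" using conjunct1[OF gP[unfolded good_lifting_def]] conjunct1[OF gQ[unfolded good_lifting_def]] by simp
    finally show ?thesis .
  qed
  obtain a r where ar: "?D = pCons a r" by (cases ?D) auto
  have a0: "a = 0" using D0 ar by simp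
  have rK: "\<forall>i. res (coeff r i) = 0" using DK ar by (metis coeff_pCons_Suc)
  have DJ: "?D \<in> ?J" using shift_in[OF J gen rK] ar a0 by simp
  have "pcompose P [:0, -1:] = ?D + pcompose Q [:0, -1:]"
    by (simp add: pcompose_diff)
  hence pJ: "pcompose P [:0, -1:] \<in> ?J" using DJ qJ J unfolding is_ideal_def by simp
  show ?thesis
    unfolding tI_P_ideal_def[of res P]
    apply (rule ideal_gen_least[OF J])
    using gen pJ by blast
qed

theorem mainTheorem8:
  fixes res :: "'b::comm_ring_1 \<Rightarrow> 'h::comm_ring_1"
    and clG :: 'b and d :: nat and c :: "nat \<Rightarrow> 'h"
    and P Q :: "'b poly"
  assumes "is_ring_hom res"
    and "good_lifting res clG d c P"
    and "good_lifting res clG d c Q"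
  shows "tI_P_ideal res P = tI_P_ideal res Q"
  using incl[OF assms(1,2,3)] incl[OF assms(1,3,2)] by blast

end
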